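(* In the basic function field $F=K(x,y)$, set $R=y/x^{q^k}$ and $S=y^{q^j}/x$. There exists a unique element $u\in F$ such that $$R=\mathrm{Tr}_k(u)+\alpha\quad\text{and}\quad S=-\mathrm{Tr}_j(u).$$ Moreover $K(u)=K(R,S)$ and $F=K(x,y)=K(x,u)=K(u,y)$.
   Context: Standing setup: $p$ is a prime, $q$ a power of $p$, $n\ge2$, $\ell=q^n$, and $K$ is either $\mathbb{F}_\ell$ or its algebraic closure $\overline{\mathbb{F}}_\ell$. For $a\ge1$, $\mathrm{Tr}_a(T)=T+T^q+\cdots+T^{q^{a-1}}$. Fix integers $j,k\ge1$ with $n=j+k$, $\gcd(j,k)=1$ and $p\nmid j$, and let $\alpha\in\mathbb{F}_p$ be the inverse of $j$ modulo $p$. The basic function field is $F=K(x,y)$ where $x$ is transcendental over $K$ and $y$ is algebraic over $K(x)$ with $\mathrm{Tr}_j(y/x^{q^k})+\mathrm{Tr}_k(y^{q^j}/x)=1$. *)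

theory Defs
  imports Main "HOL-Computational_Algebra.Polynomial"
begin

definition is_subfield :: "'a::field set \<Rightarrow> bool" where
  "is_subfield A \<longleftrightarrow> 0 \<in> A \<and> 1 \<in> A \<and>
     (\<forall>a\<in>A. \<forall>b\<in>A. a + b \<in> A \<and> a * b \<in> A) \<and>
     (\<forall>a\<in>A. - a \<in> A \<and> inverse a \<in> A)"

definition field_gen :: "'a::field set \<Rightarrow> 'a set" where
  "field_gen S = \<Inter> {A. is_subfield A \<and> S \<subseteq> A}"

definition transcendental_over :: "'a::field set \<Rightarrow> 'a \<Rightarrow> bool" where
  "transcendental_over K x \<longleftrightarrow>
     (\<forall>P. P \<noteq> 0 \<and> (\<forall>i. coeff P i \<in> K) \<longrightarrow> poly P x \<noteq> 0)"

definition alg_closed_set :: "'a::field set \<Rightarrow> bool" where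
  "alg_closed_set K \<longleftrightarrow>
     (\<forall>P. degree P \<ge> 1 \<and> (\<forall>i. coeff P i \<in> K) \<longrightarrow> (\<exists>z\<in>K. poly P z = 0))"

definition Tr :: "nat \<Rightarrow> nat \<Rightarrow> 'a::field \<Rightarrow> 'a" where
  "Tr q a T = (\<Sum>i<a. T ^ (q ^ i))"

text \<open>K is F_l (all l elements of F_l lie in the ambient field) or its algebraic
  closure (inside the ambient field).\<close>

definition base_field_choice :: "nat \<Rightarrow> 'a::field set \<Rightarrow> bool" where
  "base_field_choice l K \<longleftrightarrow>
     (K = {z. z ^ l = z} \<and> card K = l) \<or>
     (K = {z. \<exists>m\<ge>1. z ^ (l ^ m) = z} \<and> alg_closed_set K)"

end

theory Submission
  imports Defs "HOL-Computational_Algebra.Primes"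
begin

definition Gs :: "nat \<Rightarrow> nat \<Rightarrow> nat \<Rightarrow> 'a::field \<Rightarrow> 'a" where
  "Gs q c m z = (\<Sum>i<m. z ^ (q ^ (i * c)))"

lemma sum_lessThan_add_split:
  fixes a b :: nat
  shows "(\<Sum>s<a+b. f s) = (\<Sum>s<a. f s) + (\<Sum>t<b. f (a + t))"
  by (induction b rule: nat.induct) (auto simp: add.assoc)

context
  fixes q e :: nat
  assumes pc: "prime CHAR('a::field)" and qd: "q = CHAR('a) ^ e"
begin

lemma qpos: "q > 0"
  using pc qd by (simp add: prime_gt_0_nat)

lemma fr_add: "((a::'a) + b) ^ (q ^ i) = a ^ (q ^ i) + b ^ (q ^ i)"
  by (rule freshmans_dream'[OF pc, where n="e*i"]) (simp add: qd power_mult)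

lemma fr_sum: "(sum (f::_\<Rightarrow>'a) A) ^ (q ^ i) = sum (\<lambda>x. f x ^ (q ^ i)) A"
  by (rule freshmans_dream_sum'[OF pc, where n="e*i"]) (simp add: qd power_mult)

lemma fr_neg: "(-(a::'a)) ^ (q ^ i) = - (a ^ (q ^ i))"
proof -
  have "(-(a::'a)) ^ (q ^ i) + a ^ (q ^ i) = 0"
    using fr_add[of "-a" a i] qpos by (simp flip: fr_add)
  thus ?thesis by (simp add: eq_neg_iff_add_eq_0)
qed

lemma fr_diff: "((a::'a) - b) ^ (q ^ i) = a ^ (q ^ i) - b ^ (q ^ i)"
  using fr_add[of a "-b" i] fr_neg[of b i] by simp

lemma fr_q: "(sum (f::_\<Rightarrow>'a) A) ^ q = sum (\<lambda>x. f x ^ q) A"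
  using fr_sum[of f A 1] by simp

lemma fr_diff_q: "((a::'a) - b) ^ q = a ^ q - b ^ q"
  using fr_diff[of a b 1] by simp

lemma Gs_diff: "Gs q c m ((a::'a) - b) = Gs q c m a - Gs q c m b"
  unfolding Gs_def by (simp add: fr_diff sum_subtractf)

lemma Gs_zero: "Gs q c m (0::'a) = 0"
  unfolding Gs_def using qpos by (simp add: power_0_left)

lemma Gs_comm: "Gs q c m (Gs q d r (z::'a)) = Gs q d r (Gs q c m z)"
  unfolding Gs_def
  by (simp add: fr_sum flip: power_mult) (subst sum.swap, simp add: mult.commute)

lemma Gs_pow: "(Gs q c m (z::'a)) ^ q = Gs q c m (z ^ q)"
  unfolding Gs_def by (simp add: fr_q flip: power_mult) (simp add: mult.commute)

lemma Tr_Gs: "Tr q a (z::'a) = Gs q 1 a z"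
  unfolding Tr_def Gs_def by simp

lemma Tr_mult: "Gs q c m (Gs q 1 c (z::'a)) = Gs q 1 (m * c) z"
proof (induction m)
  case 0 then show ?case by (simp add: Gs_def)
next
  case (Suc m)
  have "Gs q 1 (Suc m * c) z = Gs q 1 (m * c + c) z" by (simp add: add.commute)
  also have "\<dots> = Gs q 1 (m*c) z + (\<Sum>t<c. z ^ (q ^ (m*c + t)))"
    unfolding Gs_def by (simp add: sum_lessThan_add_split)
  finally show ?case using Suc
    by (simp add: Gs_def fr_sum power_add mult.commute flip: power_mult)
qed

lemma key_identity:
  assumes "k * m' = j * m + 1"
  shows "Gs q k m' (Gs q 1 k (z::'a)) - (Gs q j m (Gs q 1 j z)) ^ q = z"
proof -
  have "Gs q k m' (Gs q 1 k z) = Gs q 1 (Suc (m * j)) z"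
    using assms Tr_mult[of k m' z] by (simp add: mult.commute)
  also have "\<dots> = z + (\<Sum>i<m*j. z ^ (q ^ Suc i))"
    unfolding Gs_def by (subst sum.lessThan_Suc_shift) simp
  also have "(\<Sum>i<m*j. z ^ (q ^ Suc i)) = (Gs q j m (Gs q 1 j z)) ^ q"
    unfolding Tr_mult Gs_pow by (simp add: Gs_def flip: power_mult)
  finally show ?thesis by simp
qed

end


lemma sf_gen: "is_subfield (field_gen S)"
  unfolding is_subfield_def field_gen_def by auto

lemma gen_sub: "S \<subseteq> field_gen S"
  unfolding field_gen_def by auto

lemma gen_min: "is_subfield A \<Longrightarrow> S \<subseteq> A \<Longrightarrow> field_gen S \<subseteq> A"
  unfolding field_gen_def by auto

lemma gen_mem: "a \<in> S \<Longrightarrow> a \<in> field_gen S"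
  using gen_sub by auto

lemma sf_add: "is_subfield A \<Longrightarrow> a \<in> A \<Longrightarrow> b \<in> A \<Longrightarrow> a + b \<in> A"
  unfolding is_subfield_def by auto
lemma sf_mult: "is_subfield A \<Longrightarrow> a \<in> A \<Longrightarrow> b \<in> A \<Longrightarrow> a * b \<in> A"
  unfolding is_subfield_def by auto
lemma sf_neg: "is_subfield A \<Longrightarrow> a \<in> A \<Longrightarrow> - a \<in> A"
  unfolding is_subfield_def by auto
lemma sf_inv: "is_subfield A \<Longrightarrow> a \<in> A \<Longrightarrow> inverse a \<in> A"
  unfolding is_subfield_def by auto
lemma sf_0: "is_subfield A \<Longrightarrow> 0 \<in> A"
  unfolding is_subfield_def by auto
lemma sf_1: "is_subfield A \<Longrightarrow> 1 \<in> A"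
  unfolding is_subfield_def by auto
lemma sf_diff: "is_subfield A \<Longrightarrow> a \<in> A \<Longrightarrow> b \<in> A \<Longrightarrow> a - b \<in> A"
  using sf_add[of A a "-b"] sf_neg[of A b] by simp
lemma sf_div: "is_subfield A \<Longrightarrow> a \<in> A \<Longrightarrow> b \<in> A \<Longrightarrow> a / b \<in> A"
  using sf_mult[of A a "inverse b"] sf_inv[of A b] by (simp add: divide_inverse)
lemma sf_pow: "is_subfield A \<Longrightarrow> a \<in> A \<Longrightarrow> a ^ n \<in> A"
  by (induction n) (auto intro: sf_1 sf_mult)
lemma sf_sum: "is_subfield A \<Longrightarrow> (\<And>i. i \<in> I \<Longrightarrow> f i \<in> A) \<Longrightarrow> sum f I \<in> A"
  by (induction I rule: infinite_finite_induct) (auto intro: sf_0 sf_add)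
lemma sf_of_nat: "is_subfield A \<Longrightarrow> of_nat n \<in> A"
  by (induction n) (auto intro: sf_0 sf_1 sf_add)
lemma sf_Gs: "is_subfield A \<Longrightarrow> a \<in> A \<Longrightarrow> Gs q c m a \<in> A"
  unfolding Gs_def by (auto intro: sf_sum sf_pow)

theorem proposition2p2:
  fixes p e j k n l :: nat and K :: "'a::field set" and x y :: 'a
  assumes "prime p" and "CHAR('a) = p" and "e \<ge> 1"
    and "n = j + k" and "n \<ge> 2" and "l = (p ^ e) ^ n"
    and "j \<ge> 1" and "k \<ge> 1" and "coprime j k" and "\<not> p dvd j"
    and "base_field_choice l K"
    and "transcendental_over K x"
    and "Tr (p ^ e) j (y / x ^ ((p ^ e) ^ k)) + Tr (p ^ e) k (y ^ ((p ^ e) ^ j) / x) = 1"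
  shows "let q = p ^ e; F = field_gen (K \<union> {x, y});
             R = y / x ^ (q ^ k); S = y ^ (q ^ j) / x;
             \<alpha> = inverse (of_nat j :: 'a)
         in (\<exists>!u. u \<in> F \<and> R = Tr q k u + \<alpha> \<and> S = - Tr q j u) \<and>
            (\<forall>u. u \<in> F \<and> R = Tr q k u + \<alpha> \<and> S = - Tr q j u \<longrightarrow>
                 field_gen (K \<union> {u}) = field_gen (K \<union> {R, S}) \<and>
                 F = field_gen (K \<union> {x, u}) \<and>
                 F = field_gen (K \<union> {u, y}))"
proof -
  define q where "q = p ^ e"
  define F where "F = field_gen (K \<union> {x, y})"
  define R where "R = y / x ^ (q ^ k)"
  define S where "S = y ^ (q ^ j) / x"
  define \<alpha> where "\<alpha> = inverse (of_nat j :: 'a)"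
  have pc: "prime CHAR('a)" using assms(1,2) by simp
  have qd: "q = CHAR('a) ^ e" using assms(2) q_def by simp
  have qpos: "q > 0" using qpos[OF pc qd] .
  have hyp: "Tr q j R + Tr q k S = 1" using assms(13) by (simp add: q_def R_def S_def)
  have lpos: "l > 0" using assms(1,6) by (simp add: prime_gt_0_nat)
  have K01: "0 \<in> K" "1 \<in> K"
    using assms(11) lpos unfolding base_field_choice_def
    by (auto simp: power_0_left intro: exI[of _ 1])
  have xnz: "x \<noteq> 0"
  proof
    assume "x = 0"
    have "\<forall>i. coeff [:0,1:] i \<in> K" using K01 by (auto simp: coeff_pCons split: nat.split)
    hence "poly [:0,1:] x \<noteq> 0" using assms(12) unfolding transcendental_over_def
      by (metis pCons_eq_0_iff zero_neq_one)
    thus False using \<open>x = 0\<close> by simp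
  qed
  have Tr0: "Tr q a (0::'a) = 0" for a unfolding Tr_def using qpos by (simp add: power_0_left)
  have Snz: "S \<noteq> 0"
  proof
    assume "S = 0"
    hence "y = 0" using xnz qpos unfolding S_def by simp
    hence "R = 0" unfolding R_def by simp
    thus False using hyp \<open>S = 0\<close> Tr0 by simp
  qed
  have jnz: "(of_nat j :: 'a) \<noteq> 0" using assms(2,10) of_nat_eq_0_iff_char_dvd by blast
  have ofj: "(of_nat j :: 'a) ^ (q ^ i) = of_nat j" for i
  proof -
    have "(of_nat j :: 'a) = (\<Sum>_<j. 1)" by simp
    also have "\<dots> ^ (q ^ i) = (\<Sum>_<j. 1 ^ (q ^ i))" by (rule fr_sum[OF pc qd])
    finally show ?thesis by simp
  qed
  have Tral: "Tr q j \<alpha> = 1"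
  proof -
    have "Tr q j \<alpha> = (\<Sum>i<j. \<alpha>)" unfolding Tr_def \<alpha>_def by (simp add: power_inverse ofj)
    also have "\<dots> = 1" using jnz by (simp add: \<alpha>_def)
    finally show ?thesis .
  qed
  have sfal: "is_subfield A \<Longrightarrow> \<alpha> \<in> A" for A unfolding \<alpha>_def by (intro sf_inv sf_of_nat)
  obtain m' m where mm: "k * m' = j * m + 1"
    using bezout_nat[of k j] assms(8,9) by (auto simp: coprime_iff_gcd_eq_1 gcd.commute)
  define U where "U a b = Gs q k m' b - (Gs q j m a) ^ q" for a b :: 'a
  have Urep: "u = U (Tr q j u) (Tr q k u)" for u
    unfolding U_def Tr_Gs[OF pc qd] using key_identity[OF pc qd mm] by simp
  define A where "A = - S"
  define B where "B = R - \<alpha>"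
  have neg: "Gs q c r (- z) = - Gs q c r z" for c r and z :: 'a
    using Gs_diff[OF pc qd, of c r 0 z] Gs_zero[OF pc qd] by simp
  have compat: "Gs q 1 k A = Gs q 1 j B"
    using hyp Tral unfolding A_def B_def Gs_diff[OF pc qd] neg Tr_Gs[OF pc qd]
    by (simp add: algebra_simps)
  define u0 where "u0 = U A B"
  have powc: "Gs q 1 c (z ^ q) = (Gs q 1 c z) ^ q" for c and z :: 'a
    using Gs_pow[OF pc qd] by simp
  have trj: "Tr q j u0 = A"
  proof -
    have "Tr q j u0 = Gs q k m' (Gs q 1 j B) - (Gs q j m (Gs q 1 j A)) ^ q"
      unfolding u0_def U_def Tr_Gs[OF pc qd] Gs_diff[OF pc qd] powc Gs_comm[OF pc qd, of 1 j] ..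
    also have "\<dots> = A" unfolding compat[symmetric] by (rule key_identity[OF pc qd mm])
    finally show ?thesis .
  qed
  have trk: "Tr q k u0 = B"
  proof -
    have "Tr q k u0 = Gs q k m' (Gs q 1 k B) - (Gs q j m (Gs q 1 k A)) ^ q"
      unfolding u0_def U_def Tr_Gs[OF pc qd] Gs_diff[OF pc qd] powc Gs_comm[OF pc qd, of 1 k] ..
    also have "\<dots> = B" unfolding compat by (rule key_identity[OF pc qd mm])
    finally show ?thesis .
  qed
  have sol_eq: "u = u0" if "R = Tr q k u + \<alpha>" "S = - Tr q j u" for u
  proof -
    have "Tr q j u = A" "Tr q k u = B" using that by (auto simp: A_def B_def)
    thus ?thesis using Urep[of u] unfolding u0_def by simp
  qed
  have sfF: "is_subfield F" unfolding F_def by (rule sf_gen)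
  have xyF: "x \<in> F" "y \<in> F" unfolding F_def by (auto intro: gen_mem)
  have RSF: "R \<in> F" "S \<in> F"
    unfolding R_def S_def
    by (rule sf_div[OF sfF xyF(2) sf_pow[OF sfF xyF(1)]],
        rule sf_div[OF sfF sf_pow[OF sfF xyF(2)] xyF(1)])
  have u0RS: "u0 \<in> field_gen (K \<union> {R, S})"
  proof -
    have sf: "is_subfield (field_gen (K \<union> {R, S}))" by (rule sf_gen)
    have m: "R \<in> field_gen (K \<union> {R, S})" "S \<in> field_gen (K \<union> {R, S})"
      by (auto intro: gen_mem)
    have "A \<in> field_gen (K \<union> {R, S})" "B \<in> field_gen (K \<union> {R, S})"
      unfolding A_def B_def by (rule sf_neg[OF sf m(2)], rule sf_diff[OF sf m(1) sfal[OF sf]])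
    thus ?thesis unfolding u0_def U_def
      by (intro sf_diff[OF sf] sf_Gs[OF sf] sf_pow[OF sf]) auto
  qed
  have KRS_F: "field_gen (K \<union> {R, S}) \<subseteq> F"
    using RSF unfolding F_def by (intro gen_min sf_gen) (auto intro: gen_mem simp: F_def)
  have u0F: "u0 \<in> F" using u0RS KRS_F by auto
  have part1: "\<exists>!u. u \<in> F \<and> R = Tr q k u + \<alpha> \<and> S = - Tr q j u"
    using u0F trj trk sol_eq by (auto simp: A_def B_def intro!: exI[of _ u0])
  have part2: "field_gen (K \<union> {u}) = field_gen (K \<union> {R, S}) \<and>
                 F = field_gen (K \<union> {x, u}) \<and> F = field_gen (K \<union> {u, y})"
    if "u \<in> F" "R = Tr q k u + \<alpha>" "S = - Tr q j u" for u
  proof -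
    have uu: "u = u0" using sol_eq that(2,3) .
    have sfu: "is_subfield (field_gen (K \<union> {u}))" by (rule sf_gen)
    have mu: "u \<in> field_gen (K \<union> {u})" by (auto intro: gen_mem)
    have RSu: "R \<in> field_gen (K \<union> {u})" "S \<in> field_gen (K \<union> {u})"
      unfolding that(2,3) Tr_Gs[OF pc qd]
      by (rule sf_add[OF sfu sf_Gs[OF sfu mu] sfal[OF sfu]], rule sf_neg[OF sfu sf_Gs[OF sfu mu]])
    have e1: "field_gen (K \<union> {u}) = field_gen (K \<union> {R, S})"
    proof
      show "field_gen (K \<union> {u}) \<subseteq> field_gen (K \<union> {R, S})"
        using u0RS uu by (intro gen_min sf_gen) (auto intro: gen_mem)
      show "field_gen (K \<union> {R, S}) \<subseteq> field_gen (K \<union> {u})"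
        using RSu by (intro gen_min sf_gen) (auto intro: gen_mem)
    qed
    have Ku_sub: "field_gen (K \<union> {u}) \<subseteq> field_gen (K \<union> {x, u})"
      by (intro gen_min sf_gen) (auto intro: gen_mem)
    have Ku_sub2: "field_gen (K \<union> {u}) \<subseteq> field_gen (K \<union> {u, y})"
      by (intro gen_min sf_gen) (auto intro: gen_mem)
    have yeq: "y = R * x ^ (q ^ k)" using xnz unfolding R_def by simp
    have xeq: "x = y ^ (q ^ j) / S" using xnz Snz unfolding S_def by (simp add: field_simps)
    have e2: "F = field_gen (K \<union> {x, u})"
    proof
      have "y \<in> field_gen (K \<union> {x, u})"
        unfolding yeq using RSu(1) Ku_sub
        by (intro sf_mult[OF sf_gen] sf_pow[OF sf_gen]) (auto intro: gen_mem)
      thus "F \<subseteq> field_gen (K \<union> {x, u})"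
        unfolding F_def by (intro gen_min sf_gen) (auto intro: gen_mem)
      show "field_gen (K \<union> {x, u}) \<subseteq> F"
        using that(1) unfolding F_def by (intro gen_min sf_gen) (auto intro: gen_mem)
    qed
    have e3: "F = field_gen (K \<union> {u, y})"
    proof
      have "x \<in> field_gen (K \<union> {u, y})"
        unfolding xeq using RSu(2) Ku_sub2
        by (intro sf_div[OF sf_gen] sf_pow[OF sf_gen]) (auto intro: gen_mem)
      thus "F \<subseteq> field_gen (K \<union> {u, y})"
        unfolding F_def by (intro gen_min sf_gen) (auto intro: gen_mem)
      show "field_gen (K \<union> {u, y}) \<subseteq> F"
        using that(1) unfolding F_def by (intro gen_min sf_gen) (auto intro: gen_mem)
    qed
    show ?thesis using e1 e2 e3 by blast
  qed
  show ?thesis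
    unfolding Let_def q_def[symmetric] F_def[symmetric] R_def[symmetric] S_def[symmetric]
      \<alpha>_def[symmetric]
    apply (intro conjI[OF part1] allI impI)
    apply (elim conjE)
    apply (rule part2)
      apply assumption+
    done
qed

end
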